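(* For every $f\in L^2(\pi)$, $\langle f,P_Nf\rangle_\pi\to(\mathbb{E}_\pi[f])^2$ as $N\to\infty$ (over integers $N$).
   Context: Let $\pi,q$ be probability densities with respect to a $\sigma$-finite measure $\mu$ on $(\mathbb{X},\mathcal{X})$ with $q(x)>0$ whenever $\pi(x)>0$; $\pi(dx)=\pi(x)\mu(dx)$, $q(dx)=q(x)\mu(dx)$, $\mathbb{S}=\{\pi>0\}$, $w(x)=\pi(x)/q(x)$ on $\mathbb{S}$ and $w=0$ elsewhere. For integer $N\ge1$, the i-SIR kernel is $P_N(z_1,A)=\int_{\mathbb{X}^{N-1}}\sum_{i=1}^N\frac{w(z_i)}{\sum_{j=1}^Nw(z_j)}\mathbf 1\{z_i\in A\}\prod_{n=2}^Nq(dz_n)$ for $z_1\in\mathbb{S}$, $P_1(z,\cdot)=\delta_z$, and $P_Nf(x)=\int f(y)P_N(x,dy)$. $\langle g,h\rangle_\pi=\int gh\,d\pi$. *)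

theory Defs
  imports "HOL-Probability.Probability"
begin

definition isir_weight :: "('a \<Rightarrow> real) \<Rightarrow> ('a \<Rightarrow> real) \<Rightarrow> 'a \<Rightarrow> real" where
  "isir_weight p q x = (if p x > 0 then p x / q x else 0)"

text \<open>The current state is z_1 = x (index 0 here),
  the N-1 fresh proposals z_2..z_N are i.i.d. with law q(dx) = q(x) mu(dx)
  (indices 1..N-1 here, i.e. y 0 .. y (N-2)).\<close>
definition isir_op :: "'a measure \<Rightarrow> ('a \<Rightarrow> real) \<Rightarrow> ('a \<Rightarrow> real) \<Rightarrow> nat \<Rightarrow> ('a \<Rightarrow> real) \<Rightarrow> 'a \<Rightarrow> real" where
  "isir_op M p q N f x =
    (if N = 1 then f x
     else \<integral>y. (\<Sum>i<N. isir_weight p q (case_nat x y i)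
                       / (\<Sum>j<N. isir_weight p q (case_nat x y j)) * f (case_nat x y i))
          \<partial>(\<Pi>\<^sub>M k\<in>{..<N - 1}. density M (\<lambda>z. ennreal (q z))))"

end

theory Submission
  imports Defs
begin

definition cn :: "nat \<Rightarrow> 'a \<times> (nat \<Rightarrow> 'a) \<Rightarrow> nat \<Rightarrow> 'a" where
  "cn m z = (\<lambda>i\<in>{..<Suc m}. case_nat (fst z) (snd z) i)"

lemma PiM_case_nat_distr:
  assumes Q: "prob_space Q"
  shows "distr (Q \<Otimes>\<^sub>M (\<Pi>\<^sub>M i\<in>{..<m}. Q)) (\<Pi>\<^sub>M i\<in>{..<Suc m}. Q)
           (cn m) = (\<Pi>\<^sub>M i\<in>{..<Suc m}. Q)"
proof -
  interpret product_prob_space "\<lambda>_. Q" UNIV using Q by (simp add: product_prob_space_def product_prob_space_axioms_def product_sigma_finite_def prob_space_imp_sigma_finite)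
  interpret P: pair_sigma_finite Q "\<Pi>\<^sub>M i\<in>{..<m}. Q"
    by (simp add: pair_sigma_finite_def Q prob_space_imp_sigma_finite prob_space_PiM)
  have meas: "(cn m) \<in> measurable (Q \<Otimes>\<^sub>M (\<Pi>\<^sub>M i\<in>{..<m}. Q)) (\<Pi>\<^sub>M i\<in>{..<Suc m}. Q)"
    unfolding cn_def
  proof (rule measurable_restrict)
    fix i assume i: "i \<in> {..<Suc m}"
    show "(\<lambda>x. case_nat (fst x) (snd x) i) \<in> measurable (Q \<Otimes>\<^sub>M (\<Pi>\<^sub>M i\<in>{..<m}. Q)) Q"
    proof (cases i)
      case 0 then show ?thesis by (simp add: split_beta')
    next
      case (Suc j) with i have "j \<in> {..<m}" by simp
      then show ?thesis using Suc by (simp add: split_beta')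
    qed
  qed
  show ?thesis
  proof (rule PiM_eqI)
    show "finite {..<Suc m}" by simp
    show "sets (distr (Q \<Otimes>\<^sub>M (\<Pi>\<^sub>M i\<in>{..<m}. Q)) (\<Pi>\<^sub>M i\<in>{..<Suc m}. Q) (cn m)) = sets (\<Pi>\<^sub>M i\<in>{..<Suc m}. Q)" by simp
    fix A assume A: "\<And>i. i \<in> {..<Suc m} \<Longrightarrow> A i \<in> sets Q"
    have pre: "(cn m) -` (Pi\<^sub>E {..<Suc m} A) \<inter> space (Q \<Otimes>\<^sub>M (\<Pi>\<^sub>M i\<in>{..<m}. Q))
       = A 0 \<times> (Pi\<^sub>E {..<m} (\<lambda>j. A (Suc j)))"
      using A[THEN sets.sets_into_space]
      apply (auto simp: cn_def space_pair_measure space_PiM PiE_iff split: nat.splits)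
      by (metis lessThan_iff nat.simps(5) Suc_less_eq subsetD)
    have "emeasure (distr (Q \<Otimes>\<^sub>M (\<Pi>\<^sub>M i\<in>{..<m}. Q)) (\<Pi>\<^sub>M i\<in>{..<Suc m}. Q) (cn m)) (Pi\<^sub>E {..<Suc m} A)
      = emeasure (Q \<Otimes>\<^sub>M (\<Pi>\<^sub>M i\<in>{..<m}. Q)) (A 0 \<times> (Pi\<^sub>E {..<m} (\<lambda>j. A (Suc j))))"
      using A by (subst emeasure_distr[OF meas]) (auto intro!: sets_PiM_I_finite simp: pre)
    also have "\<dots> = emeasure Q (A 0) * emeasure (\<Pi>\<^sub>M i\<in>{..<m}. Q) (Pi\<^sub>E {..<m} (\<lambda>j. A (Suc j)))"
      using A by (intro P.M2.emeasure_pair_measure_Times) (auto intro!: sets_PiM_I_finite)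
    also have "emeasure (\<Pi>\<^sub>M i\<in>{..<m}. Q) (Pi\<^sub>E {..<m} (\<lambda>j. A (Suc j))) = (\<Prod>j<m. emeasure Q (A (Suc j)))"
      using A by (subst emeasure_PiM) auto
    finally show "emeasure (distr (Q \<Otimes>\<^sub>M (\<Pi>\<^sub>M i\<in>{..<m}. Q)) (\<Pi>\<^sub>M i\<in>{..<Suc m}. Q) (cn m)) (Pi\<^sub>E {..<Suc m} A) = (\<Prod>i<Suc m. emeasure Q (A i))"
      by (simp only: prod.lessThan_Suc_shift)
  qed
qed

context prob_space
begin

abbreviation PP :: "nat \<Rightarrow> (nat \<Rightarrow> 'a) measure" where "PP n \<equiv> Pi\<^sub>M {..<n} (\<lambda>_. M)"

lemma PP_prob: "prob_space (PP n)"
  by (intro prob_space_PiM) (simp add: prob_space_axioms)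

lemma comp_meas:
  assumes "i < n" "g \<in> borel_measurable M"
  shows "(\<lambda>z. g (z i)) \<in> borel_measurable (PP n)"
  using assms by (intro measurable_PiM_component_rev) auto

lemma distr_comp: "i < n \<Longrightarrow> distr (PP n) M (\<lambda>z. z i) = M"
  by (rule distr_PiM_component) (auto simp: prob_space_axioms)

lemma comp_integrable:
  fixes g :: "'a \<Rightarrow> real"
  assumes "i < n" "integrable M g"
  shows "integrable (PP n) (\<lambda>z. g (z i))"
proof -
  have "integrable (distr (PP n) M (\<lambda>z. z i)) g" using assms distr_comp[OF assms(1)] by simp
  moreover have "(\<lambda>z. z i) \<in> measurable (PP n) M" using assms by simp
  ultimately show ?thesis using assms integrable_distr_eq[of "\<lambda>z. z i" "PP n" M g] by auto
qed

lemma comp_integral: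
  fixes g :: "'a \<Rightarrow> real"
  assumes "i < n" "g \<in> borel_measurable M"
  shows "(\<integral>z. g (z i) \<partial>PP n) = (\<integral>x. g x \<partial>M)"
proof -
  have "(\<integral>z. g (z i) \<partial>PP n) = integral\<^sup>L (distr (PP n) M (\<lambda>z. z i)) g"
    using assms by (intro integral_distr[symmetric]) auto
  then show ?thesis using distr_comp[OF assms(1)] by simp
qed

lemma pair_integral:
  fixes u :: "'a \<Rightarrow> real"
  assumes "i < n" "j < n" "i \<noteq> j" "integrable M u"
  shows "(\<integral>z. u (z i) * u (z j) \<partial>PP n) = (\<integral>x. u x \<partial>M)^2"
proof -
  interpret product_sigma_finite "\<lambda>_. M"
    by (simp add: product_sigma_finite_def prob_space_imp_sigma_finite prob_space_axioms)
  let ?f = "\<lambda>k. if k \<in> {i,j} then u else (\<lambda>_. 1)"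
  have 1: "(\<Prod>k\<in>{..<n}. ?f k (z k)) = u (z i) * u (z j)" for z
  proof -
    have "(\<Prod>k\<in>{..<n}. ?f k (z k)) = (\<Prod>k\<in>{..<n}. if k \<in> {i,j} then u (z k) else 1)"
      by (intro prod.cong) auto
    also have "\<dots> = (\<Prod>k\<in>{..<n} \<inter> {i,j}. u (z k))"
      by (subst prod.inter_restrict) auto
    also have "{..<n} \<inter> {i,j} = {i,j}" using assms by auto
    finally show ?thesis using assms by simp
  qed
  have 2: "(\<Prod>k\<in>{..<n}. integral\<^sup>L M (?f k)) = (\<integral>x. u x \<partial>M)^2"
  proof -
    have "(\<Prod>k\<in>{..<n}. integral\<^sup>L M (?f k)) = (\<Prod>k\<in>{..<n}. if k \<in> {i,j} then (\<integral>x. u x \<partial>M) else 1)"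
      by (intro prod.cong) (auto simp: prob_space)
    also have "\<dots> = (\<Prod>k\<in>{..<n} \<inter> {i,j}. (\<integral>x. u x \<partial>M))"
      by (subst prod.inter_restrict) auto
    also have "{..<n} \<inter> {i,j} = {i,j}" using assms by auto
    finally show ?thesis using assms by (simp add: power2_eq_square)
  qed
  have "(\<integral>z. (\<Prod>k\<in>{..<n}. ?f k (z k)) \<partial>PP n) = (\<Prod>k\<in>{..<n}. integral\<^sup>L M (?f k))"
    using assms by (intro product_integral_prod) (auto simp: prob_space)
  then show ?thesis using 1 2 by simp
qed

lemma comp_space: "z \<in> space (PP n) \<Longrightarrow> i < n \<Longrightarrow> z i \<in> space M"
  by (auto simp: space_PiM PiE_iff)

lemma sum_sq_integral:
  fixes u :: "'a \<Rightarrow> real"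
  assumes um: "u \<in> borel_measurable M" and ub: "\<And>x. x \<in> space M \<Longrightarrow> \<bar>u x\<bar> \<le> B"
    and u0: "(\<integral>x. u x \<partial>M) = 0"
  shows "(\<integral>z. (\<Sum>i<n. u (z i))^2 \<partial>PP n) = n * (\<integral>x. (u x)^2 \<partial>M)"
proof -
  interpret P: prob_space "PP n" by (rule PP_prob)
  have uint: "integrable M u"
    using um ub by (intro integrable_const_bound[where B=B]) auto
  have int_ij: "integrable (PP n) (\<lambda>z. u (z i) * u (z j))" if "i < n" "j < n" for i j
  proof (rule P.integrable_const_bound[where B="B*B"])
    show "AE z in PP n. norm (u (z i) * u (z j)) \<le> B * B"
    proof (rule AE_I2)
      fix z assume z: "z \<in> space (PP n)"
      have "\<bar>u (z i)\<bar> \<le> B" "\<bar>u (z j)\<bar> \<le> B" using ub comp_space[OF z] that by auto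
      then show "norm (u (z i) * u (z j)) \<le> B * B"
        by (simp add: abs_mult mult_mono')
    qed
    show "(\<lambda>z. u (z i) * u (z j)) \<in> borel_measurable (PP n)"
      using comp_meas[OF that(1) um] comp_meas[OF that(2) um] by measurable
  qed
  have "(\<integral>z. (\<Sum>i<n. u (z i))^2 \<partial>PP n) = (\<integral>z. (\<Sum>i<n. \<Sum>j<n. u (z i) * u (z j)) \<partial>PP n)"
    by (simp add: power2_eq_square sum_product)
  also have "\<dots> = (\<Sum>i<n. (\<integral>z. (\<Sum>j<n. u (z i) * u (z j)) \<partial>PP n))"
    using int_ij by (intro Bochner_Integration.integral_sum[where f="\<lambda>i z. \<Sum>j<n. u (z i) * u (z j)"] Bochner_Integration.integrable_sum) auto
  also have "\<dots> = (\<Sum>i<n. \<Sum>j<n. (\<integral>z. u (z i) * u (z j) \<partial>PP n))"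
  proof (intro sum.cong refl)
    fix i assume "i \<in> {..<n}"
    then show "(\<integral>z. (\<Sum>j<n. u (z i) * u (z j)) \<partial>PP n) = (\<Sum>j<n. (\<integral>z. u (z i) * u (z j) \<partial>PP n))"
      using int_ij by (intro Bochner_Integration.integral_sum[where f="\<lambda>j z. u (z i) * u (z j)"]) auto
  qed
  also have "\<dots> = (\<Sum>i<n. \<Sum>j<n. if i = j then (\<integral>x. (u x)^2 \<partial>M) else 0)"
  proof (intro sum.cong refl)
    fix i j assume ij: "i \<in> {..<n}" "j \<in> {..<n}"
    show "(\<integral>z. u (z i) * u (z j) \<partial>PP n) = (if i = j then (\<integral>x. (u x)^2 \<partial>M) else 0)"
    proof (cases "i = j")
      case True
      then show ?thesis using ij comp_integral[of i n "\<lambda>x. (u x)^2"] um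
        by (simp add: power2_eq_square)
    next
      case False
      then show ?thesis using ij pair_integral[of i n j u] uint u0 by simp
    qed
  qed
  also have "\<dots> = n * (\<integral>x. (u x)^2 \<partial>M)" by simp
  finally show ?thesis .
qed


lemma trunc_L1:
  fixes h :: "'a \<Rightarrow> real"
  assumes hi: "integrable M h"
  shows "(\<lambda>K::nat. \<integral>x. \<bar>h x - (if \<bar>h x\<bar> \<le> real K then h x else 0)\<bar> \<partial>M) \<longlonglongrightarrow> 0"
proof -
  have hm[measurable]: "h \<in> borel_measurable M" using hi by auto
  have "(\<lambda>K::nat. \<integral>x. \<bar>h x - (if \<bar>h x\<bar> \<le> real K then h x else 0)\<bar> \<partial>M) \<longlonglongrightarrow> (\<integral>x. 0 \<partial>M)"
  proof (rule integral_dominated_convergence[where w="\<lambda>x. \<bar>h x\<bar>"])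
    show "integrable M (\<lambda>x. \<bar>h x\<bar>)" using hi by auto
    show "AE x in M. (\<lambda>K::nat. \<bar>h x - (if \<bar>h x\<bar> \<le> real K then h x else 0)\<bar>) \<longlonglongrightarrow> 0"
    proof (rule AE_I2, rule tendsto_eventually)
      fix x
      show "\<forall>\<^sub>F K in sequentially. \<bar>h x - (if \<bar>h x\<bar> \<le> real K then h x else 0)\<bar> = 0"
        unfolding eventually_sequentially
      proof (rule exI[of _ "nat \<lceil>\<bar>h x\<bar>\<rceil>"], intro allI impI)
        fix K assume "nat \<lceil>\<bar>h x\<bar>\<rceil> \<le> K"
        then have "\<bar>h x\<bar> \<le> real K" by (simp add: nat_le_iff ceiling_le_iff)
        then show "\<bar>h x - (if \<bar>h x\<bar> \<le> real K then h x else 0)\<bar> = 0" by simp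
      qed
    qed
    show "\<And>K. AE x in M. norm \<bar>h x - (if \<bar>h x\<bar> \<le> real K then h x else 0)\<bar> \<le> \<bar>h x\<bar>"
      by auto
  qed auto
  then show ?thesis by simp
qed

lemma lln_L1:
  fixes h :: "'a \<Rightarrow> real"
  assumes hi: "integrable M h"
  shows "(\<lambda>n. \<integral>z. \<bar>(\<Sum>i<n. h (z i)) / n - (\<integral>x. h x \<partial>M)\<bar> \<partial>PP n) \<longlonglongrightarrow> 0"
proof (rule LIMSEQ_I)
  fix e :: real assume e: "0 < e"
  have hm[measurable]: "h \<in> borel_measurable M" using hi by auto
  define hK where "hK K x = (if \<bar>h x\<bar> \<le> real K then h x else 0)" for K :: nat and x
  obtain K where K: "(\<integral>x. \<bar>h x - hK K x\<bar> \<partial>M) < e/4"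
    using LIMSEQ_D[OF trunc_L1[OF hi], of "e/4"] e unfolding hK_def[abs_def] by force
  have hKm[measurable]: "hK K \<in> borel_measurable M" unfolding hK_def[abs_def] by measurable
  have hKb: "\<bar>hK K x\<bar> \<le> real K" for x unfolding hK_def by auto
  have hKi: "integrable M (hK K)" using hKb by (intro integrable_const_bound[where B="real K"]) auto
  have dint: "integrable M (\<lambda>x. \<bar>h x - hK K x\<bar>)" using hi hKi by auto
  define \<mu> where "\<mu> = (\<integral>x. h x \<partial>M)"
  define \<mu>K where "\<mu>K = (\<integral>x. hK K x \<partial>M)"
  have \<mu>Kb: "\<bar>\<mu>K\<bar> \<le> real K"
  proof -
    have "\<bar>\<mu>K\<bar> \<le> (\<integral>x. \<bar>hK K x\<bar> \<partial>M)" unfolding \<mu>K_def by (rule integral_abs_bound)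
    also have "\<dots> \<le> (\<integral>x. real K \<partial>M)" using hKb hKi by (intro integral_mono) auto
    finally show ?thesis by (simp add: prob_space)
  qed
  have \<mu>diff: "\<bar>\<mu> - \<mu>K\<bar> \<le> (\<integral>x. \<bar>h x - hK K x\<bar> \<partial>M)"
  proof -
    have "\<mu> - \<mu>K = (\<integral>x. h x - hK K x \<partial>M)" unfolding \<mu>_def \<mu>K_def using hi hKi by simp
    then show ?thesis by (simp add: integral_abs_bound)
  qed
  define u where "u x = hK K x - \<mu>K" for x
  have um[measurable]: "u \<in> borel_measurable M" unfolding u_def[abs_def] by measurable
  have ub: "\<bar>u x\<bar> \<le> 2 * real K" for x using hKb[of x] \<mu>Kb unfolding u_def by auto
  have u0: "(\<integral>x. u x \<partial>M) = 0" unfolding u_def \<mu>K_def using hKi by (simp add: prob_space)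
  have usq: "(u x)^2 \<le> (2 * real K)^2" for x
  proof -
    have "\<bar>u x\<bar>^2 \<le> (2 * real K)^2" by (rule power_mono[OF ub]) simp
    then show ?thesis by simp
  qed
  have u2: "(\<integral>x. (u x)^2 \<partial>M) \<le> 4 * (real K)^2"
  proof -
    have "(\<integral>x. (u x)^2 \<partial>M) \<le> (\<integral>x. (2 * real K)^2 \<partial>M)"
    proof (rule integral_mono)
      show "integrable M (\<lambda>x. (u x)^2)" using usq
        by (intro integrable_const_bound[where B="(2 * real K)^2"]) auto
      show "\<And>x. x \<in> space M \<Longrightarrow> (u x)^2 \<le> (2 * real K)^2" using usq by simp
    qed auto
    then show ?thesis by (simp add: prob_space power_mult_distrib)
  qed
  define \<eta> where "\<eta> = e / 4"
  have \<eta>: "0 < \<eta>" using e unfolding \<eta>_def by simp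
  define N0 where "N0 = nat \<lceil>16 * (real K)^2 / (\<eta> * e)\<rceil> + 1"
  show "\<exists>no. \<forall>n\<ge>no. norm ((\<integral>z. \<bar>(\<Sum>i<n. h (z i)) / n - (\<integral>x. h x \<partial>M)\<bar> \<partial>PP n) - 0) < e"
  proof (intro exI allI impI)
    fix n assume n: "N0 \<le> n"
    interpret P: prob_space "PP n" by (rule PP_prob)
    have n1: "real n \<ge> 1" using n unfolding N0_def by simp
    have nbig: "16 * (real K)^2 / (\<eta> * e) < real n"
      using n unfolding N0_def by linarith
    have nbig2: "4 * (real K)^2 / (real n * \<eta>) < e / 4"
    proof -
      have "16 * (real K)^2 < real n * (\<eta> * e)" using nbig \<eta> e by (simp add: field_simps)
      then show ?thesis using n1 \<eta> by (simp add: field_simps)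
    qed
    define a where "a z = (\<Sum>i<n. u (z i))" for z
    define b where "b z = (\<Sum>i<n. \<bar>h (z i) - hK K (z i)\<bar>)" for z
    have am[measurable]: "a \<in> borel_measurable (PP n)" unfolding a_def[abs_def]
      using comp_meas[OF _ um] by (intro borel_measurable_sum) auto
    have hcomp: "integrable (PP n) (\<lambda>z. h (z i))" if "i < n" for i using comp_integrable[OF that hi] .
    have bint: "integrable (PP n) b" unfolding b_def[abs_def]
      using comp_integrable[OF _ dint] by (intro Bochner_Integration.integrable_sum) auto
    have bI: "(\<integral>z. b z \<partial>PP n) = real n * (\<integral>x. \<bar>h x - hK K x\<bar> \<partial>M)"
    proof -
      have "(\<integral>z. b z \<partial>PP n) = (\<Sum>i<n. (\<integral>z. \<bar>h (z i) - hK K (z i)\<bar> \<partial>PP n))"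
        unfolding b_def using comp_integrable[OF _ dint]
        by (intro Bochner_Integration.integral_sum[where f="\<lambda>i z. \<bar>h (z i) - hK K (z i)\<bar>"]) auto
      also have "\<dots> = (\<Sum>i<n. (\<integral>x. \<bar>h x - hK K x\<bar> \<partial>M))"
        by (intro sum.cong refl comp_integral[where g="\<lambda>x. \<bar>h x - hK K x\<bar>"]) auto
      finally show ?thesis by simp
    qed
    have a2int: "integrable (PP n) (\<lambda>z. (a z)^2)"
    proof (rule P.integrable_const_bound[where B="(real n * (2 * real K))^2"])
      show "AE z in PP n. norm ((a z)^2) \<le> (real n * (2 * real K))^2"
      proof (rule AE_I2)
        fix z
        have "\<bar>a z\<bar> \<le> (\<Sum>i<n. \<bar>u (z i)\<bar>)" unfolding a_def by (rule sum_abs)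
        also have "\<dots> \<le> (\<Sum>i<n. 2 * real K)" using ub by (intro sum_mono) auto
        finally have "\<bar>a z\<bar> \<le> real n * (2 * real K)" by simp
        then show "norm ((a z)^2) \<le> (real n * (2 * real K))^2"
          by (simp add: abs_le_square_iff[symmetric])
      qed
    qed auto
    have a2I: "(\<integral>z. (a z)^2 \<partial>PP n) \<le> real n * (4 * (real K)^2)"
      unfolding a_def using sum_sq_integral[OF um ub u0, of n] u2 n1
      by (simp add: mult_left_mono)
    have pw: "\<bar>(\<Sum>i<n. h (z i)) / n - \<mu>\<bar> \<le> \<eta> + (a z)^2 / (real n ^ 2 * \<eta>) + b z / real n + \<bar>\<mu> - \<mu>K\<bar>" for z
    proof -
      have eq: "(\<Sum>i<n. h (z i)) / n - \<mu> = a z / n + (\<Sum>i<n. h (z i) - hK K (z i)) / n + (\<mu>K - \<mu>)"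
        unfolding a_def u_def using n1 by (simp add: sum_subtractf field_simps)
      have "\<bar>(\<Sum>i<n. h (z i) - hK K (z i))\<bar> \<le> b z" unfolding b_def by (rule sum_abs)
      then have t2: "\<bar>(\<Sum>i<n. h (z i) - hK K (z i)) / n\<bar> \<le> b z / n" using n1 by (simp add: divide_right_mono)
      have t1: "\<bar>a z / n\<bar> \<le> \<eta> + (a z)^2 / (real n ^ 2 * \<eta>)"
      proof -
        have "0 \<le> (\<bar>a z / n\<bar> - \<eta>)^2" by simp
        then have "2 * \<eta> * \<bar>a z / n\<bar> \<le> \<bar>a z / n\<bar>^2 + \<eta>^2" by (simp add: power2_eq_square algebra_simps)
        moreover have "\<bar>a z / n\<bar>^2 = (a z)^2 / real n ^ 2" by (simp add: power_divide)
        ultimately have "2 * \<eta> * \<bar>a z / n\<bar> \<le> (a z)^2 / real n ^ 2 + \<eta>^2" by simp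
        then have "\<bar>a z / n\<bar> \<le> ((a z)^2 / real n ^ 2 + \<eta>^2) / (2 * \<eta>)" using \<eta> by (simp add: field_simps)
        also have "\<dots> \<le> \<eta> + (a z)^2 / (real n ^ 2 * \<eta>)" using \<eta> n1
          by (simp add: field_simps power2_eq_square)
        finally show ?thesis .
      qed
      show ?thesis unfolding eq using t1 t2 by (smt (verit, best) abs_triangle_ineq)
    qed
    have "(\<integral>z. \<bar>(\<Sum>i<n. h (z i)) / n - \<mu>\<bar> \<partial>PP n) \<le> (\<integral>z. \<eta> + (a z)^2 / (real n ^ 2 * \<eta>) + b z / real n + \<bar>\<mu> - \<mu>K\<bar> \<partial>PP n)"
    proof (rule integral_mono)
      show "integrable (PP n) (\<lambda>z. \<bar>(\<Sum>i<n. h (z i)) / n - \<mu>\<bar>)"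
        using hcomp by (intro integrable_abs Bochner_Integration.integrable_diff integrable_divide Bochner_Integration.integrable_sum) auto
      show "integrable (PP n) (\<lambda>z. \<eta> + (a z)^2 / (real n ^ 2 * \<eta>) + b z / real n + \<bar>\<mu> - \<mu>K\<bar>)"
        using a2int bint by auto
    qed (rule pw)
    also have "\<dots> = \<eta> + (\<integral>z. (a z)^2 \<partial>PP n) / (real n ^ 2 * \<eta>) + (\<integral>z. b z \<partial>PP n) / real n + \<bar>\<mu> - \<mu>K\<bar>"
      using a2int bint by (simp add: P.prob_space)
    also have "\<dots> \<le> \<eta> + (real n * (4 * (real K)^2)) / (real n ^ 2 * \<eta>) + (\<integral>x. \<bar>h x - hK K x\<bar> \<partial>M) + (\<integral>x. \<bar>h x - hK K x\<bar> \<partial>M)"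
      using a2I \<mu>diff n1 \<eta> bI by (intro add_mono divide_right_mono) auto
    also have "(real n * (4 * (real K)^2)) / (real n ^ 2 * \<eta>) = 4 * (real K)^2 / (real n * \<eta>)"
      using n1 by (simp add: power2_eq_square)
    finally have "(\<integral>z. \<bar>(\<Sum>i<n. h (z i)) / n - \<mu>\<bar> \<partial>PP n) < e"
      using nbig2 K unfolding \<eta>_def by linarith
    then show "norm ((\<integral>z. \<bar>(\<Sum>i<n. h (z i)) / n - (\<integral>x. h x \<partial>M)\<bar> \<partial>PP n) - 0) < e"
      unfolding \<mu>_def by simp
  qed
qed

end

lemma CS_w:
  fixes a b :: "'i \<Rightarrow> real"
  assumes "\<And>i. i \<in> I \<Longrightarrow> a i \<ge> 0"
  shows "(\<Sum>i\<in>I. a i * b i)^2 \<le> (\<Sum>i\<in>I. a i) * (\<Sum>i\<in>I. a i * (b i)^2)"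
proof -
  have "(\<Sum>i\<in>I. a i * b i) = (\<Sum>i\<in>I. sqrt (a i) * (sqrt (a i) * b i))"
  proof (intro sum.cong refl)
    fix i assume "i \<in> I"
    then have "sqrt (a i) * sqrt (a i) = a i" using assms by simp
    then show "a i * b i = sqrt (a i) * (sqrt (a i) * b i)" by (metis mult.assoc)
  qed
  also have "(\<dots>)^2 \<le> (\<Sum>i\<in>I. (sqrt (a i))^2) * (\<Sum>i\<in>I. (sqrt (a i) * b i)^2)"
    by (rule Cauchy_Schwarz_ineq_sum)
  also have "(\<Sum>i\<in>I. (sqrt (a i))^2) = (\<Sum>i\<in>I. a i)"
    using assms by (intro sum.cong refl) simp
  also have "(\<Sum>i\<in>I. (sqrt (a i) * b i)^2) = (\<Sum>i\<in>I. a i * (b i)^2)"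
    using assms by (intro sum.cong refl) (simp add: power_mult_distrib)
  finally show ?thesis .
qed

lemma sum_nonneg_zero:
  fixes a :: "'i \<Rightarrow> real"
  assumes "finite I" "\<And>i. i \<in> I \<Longrightarrow> a i \<ge> 0" "(\<Sum>i\<in>I. a i) = 0" "k \<in> I"
  shows "a k = 0"
  using assms sum_nonneg_eq_0_iff by blast

lemma CS_div:
  fixes a b :: "'i \<Rightarrow> real"
  assumes "finite I" "\<And>i. i \<in> I \<Longrightarrow> a i \<ge> 0"
  shows "(\<Sum>i\<in>I. a i * b i)^2 / (\<Sum>i\<in>I. a i) \<le> (\<Sum>i\<in>I. a i * (b i)^2)"
proof (cases "(\<Sum>i\<in>I. a i) = 0")
  case True then show ?thesis using assms by (simp add: sum_nonneg mult_nonneg_nonneg)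
next
  case False
  then have "(\<Sum>i\<in>I. a i) > 0" using assms sum_nonneg[of I a] by force
  then show ?thesis using CS_w[of I a b] assms by (simp add: divide_le_eq mult.commute)
qed

lemma key_bound:
  fixes a b :: "'i \<Rightarrow> real"
  assumes fin: "finite I" and nn: "\<And>i. i \<in> I \<Longrightarrow> a i \<ge> 0" and k: "k \<in> I"
  shows "\<bar>a k * b k * (\<Sum>i\<in>I. a i * b i) / (\<Sum>i\<in>I. a i)\<bar> \<le> a k * (b k)^2 + (\<Sum>i\<in>I. a i * (b i)^2)"
proof (cases "(\<Sum>i\<in>I. a i) = 0")
  case True then show ?thesis using assms by (simp add: sum_nonneg mult_nonneg_nonneg)
next
  case False
  define W where "W = (\<Sum>i\<in>I. a i)"
  define S where "S = (\<Sum>i\<in>I. a i * b i)"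
  define V where "V = (\<Sum>i\<in>I. a i * (b i)^2)"
  have Wp: "W > 0" using False assms sum_nonneg[of I a] unfolding W_def by force
  have akW: "a k \<le> W" unfolding W_def using fin nn k by (intro member_le_sum) auto
  have ak: "a k \<ge> 0" using nn k by auto
  have SV: "S^2 / W \<le> V" unfolding S_def W_def V_def by (rule CS_div[OF fin nn])
  define x where "x = sqrt (a k) * b k"
  define y where "y = sqrt (a k) * S / W"
  have ss: "sqrt (a k) * sqrt (a k) = a k" using ak by simp
  have xy: "x * y = (sqrt (a k) * sqrt (a k)) * b k * S / W" unfolding x_def y_def
    by (simp add: mult_ac)
  then have xy: "a k * b k * S / W = x * y" using ss by simp
  have "2 * \<bar>x * y\<bar> \<le> x^2 + y^2"
  proof -
    have "0 \<le> (\<bar>x\<bar> - \<bar>y\<bar>)^2" by simp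
    then show ?thesis by (simp add: power2_eq_square algebra_simps abs_mult)
  qed
  moreover have "x^2 = a k * (b k)^2" unfolding x_def using ak by (simp add: power_mult_distrib)
  moreover have "y^2 \<le> V"
  proof -
    have "y^2 = a k * S^2 / W^2" unfolding y_def using ak by (simp add: power_mult_distrib power_divide)
    also have "\<dots> \<le> W * S^2 / W^2" using akW Wp by (intro divide_right_mono mult_right_mono) auto
    also have "\<dots> = S^2 / W" using Wp by (simp add: power2_eq_square)
    finally show ?thesis using SV by simp
  qed
  moreover have "V \<ge> 0" unfolding V_def using nn by (intro sum_nonneg) auto
  moreover have "0 \<le> a k * (b k)^2" using ak by simp
  ultimately have "\<bar>x * y\<bar> \<le> a k * (b k)^2 + V" by linarith
  then have "\<bar>a k * b k * S / W\<bar> \<le> a k * (b k)^2 + V" by (simp only: xy)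
  then show ?thesis by (simp add: S_def W_def V_def)
qed

lemma aux_half: "(1::real)/2 \<le> x \<Longrightarrow> 0 \<le> y \<Longrightarrow> 1 \<le> y + 2*x" by linarith

lemma aux_fin: "(c::real) \<le> C \<Longrightarrow> x \<le> y \<Longrightarrow> 0 \<le> d \<Longrightarrow> x \<le> d + \<bar>y - c\<bar> + C"
  by (smt (verit))

lemma X_bound:
  fixes T W V c \<delta> n :: real
  assumes n: "n > 0" and d: "\<delta> > 0" and c: "c \<ge> 0" and W: "W \<ge> 0" and TV: "T^2 / W \<le> V"
  shows "T^2 / (n * W) \<le> 2 * \<delta>^2 + \<bar>V / n - c\<bar> + c * (\<bar>T / n\<bar> / \<delta> + 2 * \<bar>W / n - 1\<bar>)"
proof (cases "\<bar>T / n\<bar> \<le> \<delta> \<and> \<bar>W / n - 1\<bar> < 1/2")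
  case True
  then have Wn: "W / n > 1/2" by linarith
  have "T^2 / (n * W) = (T/n)^2 / (W/n)" using n by (simp add: power2_eq_square)
  also have "\<dots> \<le> \<delta>^2 / (W/n)"
  proof (rule divide_right_mono)
    have "\<bar>T/n\<bar>^2 \<le> \<delta>^2" using True by (intro power_mono) auto
    then show "(T/n)^2 \<le> \<delta>^2" by (simp only: power2_abs)
    show "0 \<le> W / n" using Wn by linarith
  qed
  also have "\<dots> \<le> \<delta>^2 / (1/2)"
  proof (rule divide_left_mono)
    show "1/2 \<le> W / n" using Wn by linarith
    show "0 < W / n * (1/2)" using Wn by (intro mult_pos_pos) linarith+
  qed simp
  finally have "T^2 / (n * W) \<le> 2 * \<delta>^2" by simp
  moreover have "0 \<le> c * (\<bar>T / n\<bar> / \<delta> + 2 * \<bar>W / n - 1\<bar>)" using c d by simp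
  ultimately show ?thesis by linarith
next
  case False
  have "1 \<le> \<bar>T / n\<bar> / \<delta> + 2 * \<bar>W / n - 1\<bar>"
  proof -
    from False consider "\<bar>T / n\<bar> > \<delta>" | "\<bar>W / n - 1\<bar> \<ge> 1/2" by linarith
    then show ?thesis
    proof cases
      case 1 then have "\<bar>T / n\<bar> / \<delta> \<ge> 1" using d by (simp only: le_divide_eq_1_pos)
      moreover have "0 \<le> 2 * \<bar>W / n - 1\<bar>" by simp
      ultimately show ?thesis by linarith
    next
      case 2
      moreover have "0 \<le> \<bar>T / n\<bar> / \<delta>" using d by simp
      ultimately show ?thesis using aux_half by blast
    qed
  qed
  then have "c * 1 \<le> c * (\<bar>T / n\<bar> / \<delta> + 2 * \<bar>W / n - 1\<bar>)" using c
    by (rule mult_left_mono)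
  then have "c \<le> c * (\<bar>T / n\<bar> / \<delta> + 2 * \<bar>W / n - 1\<bar>)" by simp
  moreover have "T^2 / (n * W) \<le> V / n"
  proof -
    have "T^2 / (n * W) = (T^2 / W) / n" by (simp add: divide_divide_eq_left mult.commute)
    also have "\<dots> \<le> V / n" by (rule divide_right_mono[OF TV]) (use n in simp)
    finally show ?thesis .
  qed
  moreover have "0 \<le> 2 * \<delta>^2" by simp
  ultimately show ?thesis by (rule aux_fin)
qed

locale isir =
  fixes M :: "'a measure" and p q :: "'a \<Rightarrow> real"
  assumes sf: "sigma_finite_measure M"
    and pm[measurable]: "p \<in> borel_measurable M" and qm[measurable]: "q \<in> borel_measurable M"
    and p0: "\<And>x. x \<in> space M \<Longrightarrow> p x \<ge> 0"
    and q0: "\<And>x. x \<in> space M \<Longrightarrow> q x \<ge> 0"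
    and p1: "(\<integral>\<^sup>+x. ennreal (p x) \<partial>M) = 1"
    and q1: "(\<integral>\<^sup>+x. ennreal (q x) \<partial>M) = 1"
    and pq: "\<And>x. x \<in> space M \<Longrightarrow> p x > 0 \<Longrightarrow> q x > 0"
begin

abbreviation Q where "Q \<equiv> density M (\<lambda>x. ennreal (q x))"
abbreviation Pd where "Pd \<equiv> density M (\<lambda>x. ennreal (p x))"
abbreviation w where "w \<equiv> isir_weight p q"

lemma probQ: "prob_space Q"
proof
  have "emeasure Q (space Q) = (\<integral>\<^sup>+x. ennreal (q x) * indicator (space M) x \<partial>M)"
    by (simp add: emeasure_density)
  also have "\<dots> = (\<integral>\<^sup>+x. ennreal (q x) \<partial>M)"
    by (intro nn_integral_cong) simp
  finally show "emeasure Q (space Q) = 1" using q1 by simp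
qed

lemma probP: "prob_space Pd"
proof
  have "emeasure Pd (space Pd) = (\<integral>\<^sup>+x. ennreal (p x) * indicator (space M) x \<partial>M)"
    by (simp add: emeasure_density)
  also have "\<dots> = (\<integral>\<^sup>+x. ennreal (p x) \<partial>M)"
    by (intro nn_integral_cong) simp
  finally show "emeasure Pd (space Pd) = 1" using p1 by simp
qed

lemma wm[measurable]: "w \<in> borel_measurable M"
  unfolding isir_weight_def[abs_def] by measurable

lemma w0: "x \<in> space M \<Longrightarrow> w x \<ge> 0"
  unfolding isir_weight_def using p0 q0 by auto

lemma pw:
  assumes x: "x \<in> space M" shows "p x = q x * w x"
proof (cases "p x > 0")
  case True
  then have "q x > 0" using pq x by auto
  then show ?thesis using True unfolding isir_weight_def by simp
next
  case False
  then have "p x = 0" using p0[OF x] by linarith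
  then show ?thesis unfolding isir_weight_def by simp
qed

lemma transfer:
  fixes g :: "'a \<Rightarrow> real"
  assumes [measurable]: "g \<in> borel_measurable M"
  shows "(\<integral>x. g x \<partial>Pd) = (\<integral>x. w x * g x \<partial>Q)"
proof -
  have "(\<integral>x. g x \<partial>Pd) = (\<integral>x. p x * g x \<partial>M)"
    using p0 by (subst integral_density) auto
  also have "\<dots> = (\<integral>x. q x * (w x * g x) \<partial>M)"
    using pw by (intro Bochner_Integration.integral_cong) auto
  also have "\<dots> = (\<integral>x. w x * g x \<partial>Q)"
    using q0 by (subst integral_density) auto
  finally show ?thesis .
qed

lemma transfer_int:
  fixes g :: "'a \<Rightarrow> real"
  assumes [measurable]: "g \<in> borel_measurable M"
  shows "integrable Pd g \<longleftrightarrow> integrable Q (\<lambda>x. w x * g x)"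
proof -
  have "integrable Pd g \<longleftrightarrow> integrable M (\<lambda>x. p x * g x)"
    using p0 by (subst integrable_density) auto
  also have "\<dots> \<longleftrightarrow> integrable M (\<lambda>x. q x * (w x * g x))"
    using pw by (intro Bochner_Integration.integrable_cong) auto
  also have "\<dots> \<longleftrightarrow> integrable Q (\<lambda>x. w x * g x)"
    using q0 by (subst integrable_density) auto
  finally show ?thesis .
qed


definition Wf :: "nat \<Rightarrow> (nat \<Rightarrow> 'a) \<Rightarrow> real" where
  "Wf n z = (\<Sum>i<n. w (z i))"

definition Sf :: "nat \<Rightarrow> ('a \<Rightarrow> real) \<Rightarrow> (nat \<Rightarrow> 'a) \<Rightarrow> real" where
  "Sf n f z = (\<Sum>i<n. w (z i) * f (z i))"

definition Gj :: "nat \<Rightarrow> nat \<Rightarrow> ('a \<Rightarrow> real) \<Rightarrow> (nat \<Rightarrow> 'a) \<Rightarrow> real" where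
  "Gj n j f z = w (z j) * f (z j) * Sf n f z / Wf n z"

end

sublocale isir \<subseteq> Qp: prob_space Q by (rule probQ)

context isir
begin

lemma sum_meas:
  fixes g :: "'a \<Rightarrow> real"
  assumes "g \<in> borel_measurable M"
  shows "(\<lambda>z. \<Sum>i<n. g (z i)) \<in> borel_measurable (Qp.PP n)"
proof (rule borel_measurable_sum)
  fix i assume "i \<in> {..<n}"
  then show "(\<lambda>z. g (z i)) \<in> borel_measurable (Qp.PP n)"
    by (intro Qp.comp_meas) (use assms in auto)
qed

lemma Wf_meas: "Wf n \<in> borel_measurable (Qp.PP n)"
  unfolding Wf_def[abs_def] by (rule sum_meas) simp

lemma Sf_meas: "f \<in> borel_measurable M \<Longrightarrow> Sf n f \<in> borel_measurable (Qp.PP n)"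
  unfolding Sf_def[abs_def] by (rule sum_meas) simp

lemma comp_meas': "g \<in> borel_measurable M \<Longrightarrow> i < n \<Longrightarrow> (\<lambda>z. g (z i)) \<in> borel_measurable (Qp.PP n)"
  by (intro Qp.comp_meas) auto

lemma Gj_meas:
  assumes fm: "f \<in> borel_measurable M" and j: "j < n"
  shows "Gj n j f \<in> borel_measurable (Qp.PP n)"
proof -
  have 1: "(\<lambda>z. w (z j)) \<in> borel_measurable (Qp.PP n)" by (rule comp_meas'[OF wm j])
  have 2: "(\<lambda>z. f (z j)) \<in> borel_measurable (Qp.PP n)" by (rule comp_meas'[OF fm j])
  have 3: "Sf n f \<in> borel_measurable (Qp.PP n)" by (rule Sf_meas[OF fm])
  have 4: "Wf n \<in> borel_measurable (Qp.PP n)" by (rule Wf_meas)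
  have "(\<lambda>z. w (z j) * f (z j) * Sf n f z / Wf n z) \<in> borel_measurable (Qp.PP n)"
    by (intro borel_measurable_divide borel_measurable_times 1 2 3 4)
  then show ?thesis unfolding Gj_def[abs_def] .
qed

lemma zspace: "z \<in> space (Qp.PP n) \<Longrightarrow> i < n \<Longrightarrow> z i \<in> space M"
  using Qp.comp_space by simp

lemma Gj_bound:
  assumes z: "z \<in> space (Qp.PP n)" and j: "j < n"
  shows "\<bar>Gj n j f z\<bar> \<le> w (z j) * (f (z j))^2 + (\<Sum>i<n. w (z i) * (f (z i))^2)"
  unfolding Gj_def Sf_def Wf_def
  using key_bound[of "{..<n}" "\<lambda>i. w (z i)" j "\<lambda>i. f (z i)"] j w0 zspace[OF z] by auto

lemma Gj_int:
  assumes fm: "f \<in> borel_measurable M" and f2: "integrable Pd (\<lambda>x. (f x)^2)" and j: "j < n"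
  shows "integrable (Qp.PP n) (Gj n j f)"
proof (rule Bochner_Integration.integrable_bound)
  have wf2: "integrable Q (\<lambda>x. w x * (f x)^2)" using f2 transfer_int[of "\<lambda>x. (f x)^2"] fm by simp
  show "integrable (Qp.PP n) (\<lambda>z. w (z j) * (f (z j))^2 + (\<Sum>i<n. w (z i) * (f (z i))^2))"
    using Qp.comp_integrable[OF _ wf2] j by (intro Bochner_Integration.integrable_add Bochner_Integration.integrable_sum) auto
  show "Gj n j f \<in> borel_measurable (Qp.PP n)" using Gj_meas[OF fm j] .
  show "AE z in Qp.PP n. norm (Gj n j f z) \<le> norm (w (z j) * (f (z j))^2 + (\<Sum>i<n. w (z i) * (f (z i))^2))"
  proof (rule AE_I2)
    fix z assume z: "z \<in> space (Qp.PP n)"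
    have "0 \<le> w (z j) * (f (z j))^2 + (\<Sum>i<n. w (z i) * (f (z i))^2)"
      using w0 zspace[OF z] j by (intro add_nonneg_nonneg sum_nonneg mult_nonneg_nonneg) auto
    then show "norm (Gj n j f z) \<le> norm (w (z j) * (f (z j))^2 + (\<Sum>i<n. w (z i) * (f (z i))^2))"
      using Gj_bound[OF z j] by simp
  qed
qed


definition tau :: "nat \<Rightarrow> nat \<Rightarrow> nat" where
  "tau j i = (if i = 0 then j else if i = j then 0 else i)"

lemma tau_inv: "tau j (tau j i) = i"
  unfolding tau_def by auto

lemma tau_inj: "inj_on (tau j) A"
  by (metis inj_onI tau_inv)

lemma tau_img: "j < n \<Longrightarrow> tau j ` {..<n} = {..<n}"
proof
  assume j: "j < n"
  show "tau j ` {..<n} \<subseteq> {..<n}" using j unfolding tau_def by auto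
  show "{..<n} \<subseteq> tau j ` {..<n}"
  proof
    fix i assume i: "i \<in> {..<n}"
    have "tau j i \<in> {..<n}" using i j unfolding tau_def by auto
    then show "i \<in> tau j ` {..<n}" using tau_inv[of j i] by (metis image_eqI)
  qed
qed

lemma sum_tau:
  fixes g :: "nat \<Rightarrow> real"
  assumes "j < n" shows "(\<Sum>i<n. g (tau j i)) = (\<Sum>i<n. g i)"
proof -
  have "(\<Sum>i<n. g i) = sum g (tau j ` {..<n})" using tau_img[OF assms] by simp
  also have "\<dots> = (\<Sum>i<n. g (tau j i))" by (simp add: sum.reindex[OF tau_inj])
  finally show ?thesis by simp
qed

lemma Gj_sym:
  assumes fm: "f \<in> borel_measurable M" and j: "j < n"
  shows "(\<integral>z. Gj n j f z \<partial>Qp.PP n) = (\<integral>z. Gj n 0 f z \<partial>Qp.PP n)"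
proof -
  define t where "t = (\<lambda>\<omega>. \<lambda>i\<in>{..<n}. \<omega> (tau j i) :: 'a)"
  have inI: "i < n \<Longrightarrow> tau j i < n" for i using j unfolding tau_def by auto
  have D: "distr (Qp.PP n) (Qp.PP n) t = Qp.PP n"
    using distr_PiM_reindex[of "{..<n}" "\<lambda>_. Q" "tau j" "{..<n}"] probQ tau_inj[of j "{..<n}"] inI
    unfolding t_def by (auto simp: Pi_iff)
  have tm: "t \<in> measurable (Qp.PP n) (Qp.PP n)"
    unfolding t_def
  proof (rule measurable_restrict)
    fix i assume "i \<in> {..<n}"
    then have "tau j i \<in> {..<n}" using inI by auto
    then show "(\<lambda>\<omega>. \<omega> (tau j i)) \<in> measurable (Qp.PP n) Q"
      by (rule measurable_component_singleton)
  qed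
  have n0: "0 < n" using j by simp
  have eq: "Gj n 0 f (t \<omega>) = Gj n j f \<omega>" for \<omega>
  proof -
    have S: "Sf n f (t \<omega>) = Sf n f \<omega>"
    proof -
      have "Sf n f (t \<omega>) = (\<Sum>i<n. w (\<omega> (tau j i)) * f (\<omega> (tau j i)))"
        unfolding Sf_def t_def by (intro sum.cong) auto
      also have "\<dots> = Sf n f \<omega>" unfolding Sf_def
        by (rule sum_tau[OF j, where g="\<lambda>i. w (\<omega> i) * f (\<omega> i)"])
      finally show ?thesis .
    qed
    have W: "Wf n (t \<omega>) = Wf n \<omega>"
    proof -
      have "Wf n (t \<omega>) = (\<Sum>i<n. w (\<omega> (tau j i)))"
        unfolding Wf_def t_def by (intro sum.cong) auto
      also have "\<dots> = Wf n \<omega>" unfolding Wf_def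
        by (rule sum_tau[OF j, where g="\<lambda>i. w (\<omega> i)"])
      finally show ?thesis .
    qed
    have "t \<omega> 0 = \<omega> j" unfolding t_def tau_def using n0 by simp
    then show ?thesis unfolding Gj_def using S W by simp
  qed
  have "(\<integral>z. Gj n 0 f z \<partial>Qp.PP n) = (\<integral>z. Gj n 0 f z \<partial>distr (Qp.PP n) (Qp.PP n) t)"
    using D by simp
  also have "\<dots> = (\<integral>z. Gj n 0 f (t z) \<partial>Qp.PP n)"
    by (rule integral_distr[OF tm Gj_meas[OF fm n0]])
  also have "\<dots> = (\<integral>z. Gj n j f z \<partial>Qp.PP n)" using eq by simp
  finally show ?thesis by simp
qed

lemma sum_Gj: "(\<Sum>j<n. Gj n j f z) = (Sf n f z)^2 / Wf n z"
proof -
  have "(\<Sum>j<n. Gj n j f z) = (\<Sum>j<n. w (z j) * f (z j)) * Sf n f z / Wf n z"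
    unfolding Gj_def by (simp add: sum_divide_distrib[symmetric] sum_distrib_right[symmetric])
  then show ?thesis unfolding Sf_def by (simp add: power2_eq_square)
qed

lemma F_sym:
  assumes fm: "f \<in> borel_measurable M" and f2: "integrable Pd (\<lambda>x. (f x)^2)"
  shows "real n * (\<integral>z. Gj n 0 f z \<partial>Qp.PP n) = (\<integral>z. (Sf n f z)^2 / Wf n z \<partial>Qp.PP n)"
proof -
  have "(\<integral>z. (Sf n f z)^2 / Wf n z \<partial>Qp.PP n) = (\<integral>z. (\<Sum>j<n. Gj n j f z) \<partial>Qp.PP n)"
    by (simp add: sum_Gj)
  also have "\<dots> = (\<Sum>j<n. (\<integral>z. Gj n j f z \<partial>Qp.PP n))"
    by (rule Bochner_Integration.integral_sum[where f="\<lambda>j. Gj n j f"]) (use Gj_int[OF fm f2] in auto)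
  also have "\<dots> = (\<Sum>j<n. (\<integral>z. Gj n 0 f z \<partial>Qp.PP n))"
    by (intro sum.cong refl Gj_sym[OF fm]) auto
  finally show ?thesis by simp
qed


lemma cn_measQ: "cn m \<in> measurable (Q \<Otimes>\<^sub>M Qp.PP m) (Qp.PP (Suc m))"
  unfolding cn_def
proof (rule measurable_restrict)
  fix i assume i: "i \<in> {..<Suc m}"
  show "(\<lambda>x. case_nat (fst x) (snd x) i) \<in> measurable (Q \<Otimes>\<^sub>M Qp.PP m) Q"
  proof (cases i)
    case 0 then show ?thesis by simp
  next
    case (Suc j) with i have j: "j \<in> {..<m}" by simp
    have "(\<lambda>x. snd x j) \<in> measurable (Q \<Otimes>\<^sub>M Qp.PP m) Q"
      using measurable_component_singleton[OF j, of "\<lambda>_. Q"] by (rule measurable_snd'')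
    then show ?thesis using Suc by simp
  qed
qed

lemma cn_measM: "cn m \<in> measurable (M \<Otimes>\<^sub>M Qp.PP m) (Qp.PP (Suc m))"
proof -
  have "sets (M \<Otimes>\<^sub>M Qp.PP m) = sets (Q \<Otimes>\<^sub>M Qp.PP m)"
    by (intro sets_pair_measure_cong) auto
  then show ?thesis using cn_measQ measurable_cong_sets by blast
qed

lemma cn_apply: "i < Suc m \<Longrightarrow> cn m (x, y) i = case_nat x y i"
  unfolding cn_def by simp

lemma isir_eq:
  assumes m: "m \<ge> 1"
  shows "isir_op M p q (Suc m) f x = (\<integral>y. Sf (Suc m) f (cn m (x,y)) / Wf (Suc m) (cn m (x,y)) \<partial>Qp.PP m)"
proof -
  have pt: "(\<Sum>i<Suc m. w (case_nat x y i) / (\<Sum>j<Suc m. w (case_nat x y j)) * f (case_nat x y i))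
      = Sf (Suc m) f (cn m (x,y)) / Wf (Suc m) (cn m (x,y))" for y
  proof -
    have S: "Sf (Suc m) f (cn m (x,y)) = (\<Sum>i<Suc m. w (case_nat x y i) * f (case_nat x y i))"
      unfolding Sf_def by (intro sum.cong refl) (simp add: cn_apply)
    have W: "Wf (Suc m) (cn m (x,y)) = (\<Sum>i<Suc m. w (case_nat x y i))"
      unfolding Wf_def by (intro sum.cong refl) (simp add: cn_apply)
    show ?thesis unfolding S W sum_divide_distrib
      by (rule sum.cong[OF refl]) (simp only: times_divide_eq_left)
  qed
  have "Suc m \<noteq> 1" using m by simp
  then show ?thesis unfolding isir_op_def using pt by simp
qed

lemma R_meas: "f \<in> borel_measurable M \<Longrightarrow> (\<lambda>z. Sf n f z / Wf n z) \<in> borel_measurable (Qp.PP n)"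
  by (intro borel_measurable_divide Sf_meas Wf_meas)

lemma isir_meas:
  assumes m: "m \<ge> 1" and fm: "f \<in> borel_measurable M"
  shows "isir_op M p q (Suc m) f \<in> borel_measurable M"
proof -
  interpret PPm: prob_space "Qp.PP m" by (rule Qp.PP_prob)
  have "(\<lambda>(x, y). Sf (Suc m) f (cn m (x,y)) / Wf (Suc m) (cn m (x,y))) \<in> borel_measurable (M \<Otimes>\<^sub>M Qp.PP m)"
    using measurable_comp[OF cn_measM R_meas[OF fm]] by (simp add: case_prod_beta' comp_def)
  then have "(\<lambda>x. \<integral>y. Sf (Suc m) f (cn m (x,y)) / Wf (Suc m) (cn m (x,y)) \<partial>Qp.PP m) \<in> borel_measurable M"
    by (rule PPm.borel_measurable_lebesgue_integral)
  moreover have "isir_op M p q (Suc m) f = (\<lambda>x. \<integral>y. Sf (Suc m) f (cn m (x,y)) / Wf (Suc m) (cn m (x,y)) \<partial>Qp.PP m)"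
    by (rule ext) (rule isir_eq[OF m])
  ultimately show ?thesis by (simp only:)
qed

lemma main_eq:
  assumes m: "m \<ge> 1" and fm[measurable]: "f \<in> borel_measurable M" and f2: "integrable Pd (\<lambda>x. (f x)^2)"
  shows "(\<integral>x. f x * isir_op M p q (Suc m) f x \<partial>Pd) = (\<integral>z. Gj (Suc m) 0 f z \<partial>Qp.PP (Suc m))"
proof -
  interpret PQ: pair_sigma_finite Q "Qp.PP m"
    by (simp add: pair_sigma_finite_def prob_space_imp_sigma_finite probQ Qp.PP_prob)
  have Pm[measurable]: "isir_op M p q (Suc m) f \<in> borel_measurable M" by (rule isir_meas[OF m fm])
  have D: "distr (Q \<Otimes>\<^sub>M Qp.PP m) (Qp.PP (Suc m)) (cn m) = Qp.PP (Suc m)"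
    by (rule PiM_case_nat_distr[OF probQ])
  have Gm: "Gj (Suc m) 0 f \<in> borel_measurable (Qp.PP (Suc m))" by (rule Gj_meas[OF fm]) simp
  have int: "integrable (Q \<Otimes>\<^sub>M Qp.PP m) (\<lambda>xy. Gj (Suc m) 0 f (cn m xy))"
  proof -
    have "integrable (distr (Q \<Otimes>\<^sub>M Qp.PP m) (Qp.PP (Suc m)) (cn m)) (Gj (Suc m) 0 f)"
      unfolding D by (rule Gj_int[OF fm f2]) simp
    then show ?thesis by (subst integrable_distr_eq[OF cn_measQ Gm, symmetric])
  qed
  have "(\<integral>x. f x * isir_op M p q (Suc m) f x \<partial>Pd) = (\<integral>x. w x * (f x * isir_op M p q (Suc m) f x) \<partial>Q)"
    by (rule transfer) measurable
  also have "\<dots> = (\<integral>x. (\<integral>y. Gj (Suc m) 0 f (cn m (x, y)) \<partial>Qp.PP m) \<partial>Q)"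
  proof (intro Bochner_Integration.integral_cong refl)
    fix x
    have "w x * (f x * isir_op M p q (Suc m) f x)
        = (\<integral>y. (w x * f x) * (Sf (Suc m) f (cn m (x,y)) / Wf (Suc m) (cn m (x,y))) \<partial>Qp.PP m)"
      unfolding isir_eq[OF m] integral_mult_right_zero by (simp only: mult.assoc)
    also have "\<dots> = (\<integral>y. Gj (Suc m) 0 f (cn m (x, y)) \<partial>Qp.PP m)"
      unfolding Gj_def by (intro Bochner_Integration.integral_cong refl) (simp add: cn_apply)
    finally show "w x * (f x * isir_op M p q (Suc m) f x) = (\<integral>y. Gj (Suc m) 0 f (cn m (x, y)) \<partial>Qp.PP m)" .
  qed
  also have "\<dots> = (\<integral>xy. Gj (Suc m) 0 f (cn m xy) \<partial>(Q \<Otimes>\<^sub>M Qp.PP m))"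
    using PQ.integral_fst'[OF int] by simp
  also have "\<dots> = (\<integral>z. Gj (Suc m) 0 f z \<partial>distr (Q \<Otimes>\<^sub>M Qp.PP m) (Qp.PP (Suc m)) (cn m))"
    by (rule integral_distr[OF cn_measQ Gm, symmetric])
  also have "\<dots> = (\<integral>z. Gj (Suc m) 0 f z \<partial>Qp.PP (Suc m))" unfolding D ..
  finally show ?thesis .
qed

end

locale isir_f = isir +
  fixes f :: "'a \<Rightarrow> real"
  assumes fm[measurable]: "f \<in> borel_measurable M"
    and f2: "integrable Pd (\<lambda>x. (f x)^2)"
begin

definition "\<mu> = (\<integral>x. f x \<partial>Pd)"
definition "g x = f x - \<mu>"
definition "c = (\<integral>x. (g x)^2 \<partial>Pd)"
definition Tf :: "nat \<Rightarrow> (nat \<Rightarrow> 'a) \<Rightarrow> real" where "Tf n z = (\<Sum>i<n. w (z i) * g (z i))"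
definition Vf :: "nat \<Rightarrow> (nat \<Rightarrow> 'a) \<Rightarrow> real" where "Vf n z = (\<Sum>i<n. w (z i) * (g (z i))^2)"

lemma gm[measurable]: "g \<in> borel_measurable M" unfolding g_def[abs_def] by measurable

lemma f1: "integrable Pd f"
  using finite_measure.square_integrable_imp_integrable[OF prob_space.finite_measure[OF probP], of f] f2 by simp

lemma g2: "integrable Pd (\<lambda>x. (g x)^2)"
proof -
  have "integrable Pd (\<lambda>x. (f x)^2 - 2 * \<mu> * f x + \<mu>^2)"
    using f2 f1 prob_space.finite_measure[OF probP]
    by (intro Bochner_Integration.integrable_add Bochner_Integration.integrable_diff integrable_mult_right) (auto intro: finite_measure.integrable_const)
  moreover have "(\<lambda>x. (f x)^2 - 2 * \<mu> * f x + \<mu>^2) = (\<lambda>x. (g x)^2)"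
    unfolding g_def by (rule ext) (simp add: power2_eq_square algebra_simps)
  ultimately show ?thesis by simp
qed

lemma c0: "c \<ge> 0" unfolding c_def by simp

lemma wint: "integrable Q w" "(\<integral>x. w x \<partial>Q) = 1"
proof -
  have "integrable Pd (\<lambda>x. 1::real)" using prob_space.finite_measure[OF probP] by (simp add: finite_measure.integrable_const)
  then show "integrable Q w" using transfer_int[of "\<lambda>x. 1"] by simp
  have "(\<integral>x. 1 \<partial>Pd) = (1::real)" using prob_space.prob_space[OF probP] by simp
  then show "(\<integral>x. w x \<partial>Q) = 1" using transfer[of "\<lambda>x. 1"] by simp
qed

lemma wgint: "integrable Q (\<lambda>x. w x * g x)" "(\<integral>x. w x * g x \<partial>Q) = 0"
proof -
  have gi: "integrable Pd g" unfolding g_def[abs_def] using f1 prob_space.finite_measure[OF probP]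
    by (intro Bochner_Integration.integrable_diff) (auto intro: finite_measure.integrable_const)
  then show "integrable Q (\<lambda>x. w x * g x)" using transfer_int[OF gm] by simp
  have "(\<integral>x. g x \<partial>Pd) = 0" unfolding g_def[abs_def] \<mu>_def using f1 prob_space.prob_space[OF probP]
    by (subst Bochner_Integration.integral_diff) (auto intro: finite_measure.integrable_const prob_space.finite_measure[OF probP])
  then show "(\<integral>x. w x * g x \<partial>Q) = 0" using transfer[OF gm] by simp
qed

lemma wfint: "integrable Q (\<lambda>x. w x * f x)" "(\<integral>x. w x * f x \<partial>Q) = \<mu>"
  using f1 transfer_int[OF fm] transfer[OF fm] unfolding \<mu>_def by auto

lemma wg2int: "integrable Q (\<lambda>x. w x * (g x)^2)" "(\<integral>x. w x * (g x)^2 \<partial>Q) = c"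
proof -
  have m: "(\<lambda>x. (g x)^2) \<in> borel_measurable M" by measurable
  show "integrable Q (\<lambda>x. w x * (g x)^2)" using g2 transfer_int[OF m] by simp
  show "(\<integral>x. w x * (g x)^2 \<partial>Q) = c" using transfer[OF m] unfolding c_def by simp
qed

lemma wf2int: "integrable Q (\<lambda>x. w x * (f x)^2)"
proof -
  have m: "(\<lambda>x. (f x)^2) \<in> borel_measurable M" by measurable
  show ?thesis using f2 transfer_int[OF m] by simp
qed

end

context isir_f
begin

lemma lln_int:
  fixes h :: "'a \<Rightarrow> real"
  assumes "integrable Q h"
  shows "integrable (Qp.PP n) (\<lambda>z. \<bar>(\<Sum>i<n. h (z i)) / n - C\<bar>)"
proof -
  have "integrable (Qp.PP n) (\<lambda>z. C)"
    by (rule finite_measure.integrable_const[OF prob_space.finite_measure[OF Qp.PP_prob]])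
  then show ?thesis using Qp.comp_integrable[OF _ assms]
    by (intro integrable_abs Bochner_Integration.integrable_diff integrable_divide Bochner_Integration.integrable_sum) auto
qed

lemma sum_int:
  fixes h :: "'a \<Rightarrow> real"
  assumes "integrable Q h"
  shows "integrable (Qp.PP n) (\<lambda>z. \<Sum>i<n. h (z i))" "(\<integral>z. (\<Sum>i<n. h (z i)) \<partial>Qp.PP n) = n * (\<integral>x. h x \<partial>Q)"
proof -
  show "integrable (Qp.PP n) (\<lambda>z. \<Sum>i<n. h (z i))"
    using Qp.comp_integrable[OF _ assms] by (intro Bochner_Integration.integrable_sum) auto
  have "(\<integral>z. (\<Sum>i<n. h (z i)) \<partial>Qp.PP n) = (\<Sum>i<n. (\<integral>z. h (z i) \<partial>Qp.PP n))"
    using Qp.comp_integrable[OF _ assms]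
    by (intro Bochner_Integration.integral_sum[where f="\<lambda>i z. h (z i)"]) auto
  also have "\<dots> = (\<Sum>i<n. (\<integral>x. h x \<partial>Q))"
    using assms by (intro sum.cong refl Qp.comp_integral) auto
  finally show "(\<integral>z. (\<Sum>i<n. h (z i)) \<partial>Qp.PP n) = n * (\<integral>x. h x \<partial>Q)" by simp
qed

lemma W_nn: "z \<in> space (Qp.PP n) \<Longrightarrow> Wf n z \<ge> 0"
  unfolding Wf_def using w0 zspace by (intro sum_nonneg) auto

lemma Tf_eq: "Tf n z = Sf n f z - \<mu> * Wf n z"
  unfolding Tf_def Sf_def Wf_def g_def by (simp add: algebra_simps sum_subtractf sum_distrib_left)

lemma pt_ident:
  assumes z: "z \<in> space (Qp.PP n)"
  shows "(Sf n f z)^2 / Wf n z = (Tf n z)^2 / Wf n z + 2 * \<mu> * Sf n f z - \<mu>^2 * Wf n z"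
proof (cases "Wf n z = 0")
  case True
  have "\<forall>i\<in>{..<n}. w (z i) = 0"
    using True w0 zspace[OF z] unfolding Wf_def by (subst sum_nonneg_eq_0_iff[symmetric]) auto
  then have "Sf n f z = 0" unfolding Sf_def by simp
  then show ?thesis using True by (simp add: Tf_eq)
next
  case False
  then show ?thesis unfolding Tf_eq by (simp add: field_simps power2_eq_square)
qed

lemma S2W_int: "integrable (Qp.PP n) (\<lambda>z. (Sf n f z)^2 / Wf n z)"
proof (rule Bochner_Integration.integrable_bound)
  show "integrable (Qp.PP n) (\<lambda>z. \<Sum>i<n. w (z i) * (f (z i))^2)" using sum_int(1)[OF wf2int] .
  show "(\<lambda>z. (Sf n f z)^2 / Wf n z) \<in> borel_measurable (Qp.PP n)"
    using Sf_meas[OF fm, of n] Wf_meas[of n] by (intro borel_measurable_divide borel_measurable_power)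
  show "AE z in Qp.PP n. norm ((Sf n f z)^2 / Wf n z) \<le> norm (\<Sum>i<n. w (z i) * (f (z i))^2)"
  proof (rule AE_I2)
    fix z assume z: "z \<in> space (Qp.PP n)"
    have "(Sf n f z)^2 / Wf n z \<le> (\<Sum>i<n. w (z i) * (f (z i))^2)"
      unfolding Sf_def Wf_def using w0 zspace[OF z] by (intro CS_div) auto
    moreover have "0 \<le> (Sf n f z)^2 / Wf n z" using W_nn[OF z] by simp
    ultimately show "norm ((Sf n f z)^2 / Wf n z) \<le> norm (\<Sum>i<n. w (z i) * (f (z i))^2)" by simp
  qed
qed

lemma TV: "z \<in> space (Qp.PP n) \<Longrightarrow> (Tf n z)^2 / Wf n z \<le> Vf n z"
  unfolding Tf_def Wf_def Vf_def using w0 zspace by (intro CS_div) auto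

lemma T2W_int: "integrable (Qp.PP n) (\<lambda>z. (Tf n z)^2 / Wf n z)"
proof (rule Bochner_Integration.integrable_bound)
  show "integrable (Qp.PP n) (Vf n)" unfolding Vf_def[abs_def] using sum_int(1)[OF wg2int(1)] .
  have "Tf n \<in> borel_measurable (Qp.PP n)" unfolding Tf_def[abs_def] by (rule sum_meas) measurable
  then show "(\<lambda>z. (Tf n z)^2 / Wf n z) \<in> borel_measurable (Qp.PP n)"
    using Wf_meas[of n] by (intro borel_measurable_divide borel_measurable_power)
  show "AE z in Qp.PP n. norm ((Tf n z)^2 / Wf n z) \<le> norm (Vf n z)"
  proof (rule AE_I2)
    fix z assume z: "z \<in> space (Qp.PP n)"
    have "0 \<le> (Tf n z)^2 / Wf n z" using W_nn[OF z] by simp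
    then show "norm ((Tf n z)^2 / Wf n z) \<le> norm (Vf n z)" using TV[OF z] by simp
  qed
qed

definition E :: "nat \<Rightarrow> real" where "E n = (\<integral>z. (Tf n z)^2 / (n * Wf n z) \<partial>Qp.PP n)"

lemma F_eq:
  assumes n: "n \<ge> 1"
  shows "(\<integral>z. (Sf n f z)^2 / Wf n z \<partial>Qp.PP n) / n = \<mu>^2 + E n"
proof -
  have Si: "integrable (Qp.PP n) (Sf n f)" "(\<integral>z. Sf n f z \<partial>Qp.PP n) = n * \<mu>"
    unfolding Sf_def[abs_def] using sum_int[OF wfint(1)] wfint(2) by auto
  have Wi: "integrable (Qp.PP n) (Wf n)" "(\<integral>z. Wf n z \<partial>Qp.PP n) = n"
    unfolding Wf_def[abs_def] using sum_int[OF wint(1)] wint(2) by auto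
  have "(\<integral>z. (Sf n f z)^2 / Wf n z \<partial>Qp.PP n)
      = (\<integral>z. (Tf n z)^2 / Wf n z + 2 * \<mu> * Sf n f z - \<mu>^2 * Wf n z \<partial>Qp.PP n)"
    by (intro Bochner_Integration.integral_cong refl pt_ident)
  also have "\<dots> = (\<integral>z. (Tf n z)^2 / Wf n z \<partial>Qp.PP n) + 2 * \<mu> * (\<integral>z. Sf n f z \<partial>Qp.PP n) - \<mu>^2 * (\<integral>z. Wf n z \<partial>Qp.PP n)"
    using T2W_int Si(1) Wi(1) by simp
  also have "\<dots> = (\<integral>z. (Tf n z)^2 / Wf n z \<partial>Qp.PP n) + n * \<mu>^2"
    unfolding Si(2) Wi(2) by (simp add: power2_eq_square)
  finally have 1: "(\<integral>z. (Sf n f z)^2 / Wf n z \<partial>Qp.PP n) = (\<integral>z. (Tf n z)^2 / Wf n z \<partial>Qp.PP n) + n * \<mu>^2" .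
  have "E n = (\<integral>z. (Tf n z)^2 / Wf n z / n \<partial>Qp.PP n)"
    unfolding E_def by (intro Bochner_Integration.integral_cong refl) (simp add: divide_divide_eq_left mult.commute)
  also have "\<dots> = (\<integral>z. (Tf n z)^2 / Wf n z \<partial>Qp.PP n) / n" by (rule integral_divide_zero)
  finally have 2: "E n = (\<integral>z. (Tf n z)^2 / Wf n z \<partial>Qp.PP n) / n" .
  show ?thesis unfolding 1 2 using n by (simp add: field_simps)
qed


definition a1 :: "nat \<Rightarrow> real" where
  "a1 n = (\<integral>z. \<bar>(\<Sum>i<n. w (z i) * (g (z i))^2) / n - c\<bar> \<partial>Qp.PP n)"
definition a2 :: "nat \<Rightarrow> real" where
  "a2 n = (\<integral>z. \<bar>(\<Sum>i<n. w (z i) * g (z i)) / n - 0\<bar> \<partial>Qp.PP n)"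
definition a3 :: "nat \<Rightarrow> real" where
  "a3 n = (\<integral>z. \<bar>(\<Sum>i<n. w (z i)) / n - 1\<bar> \<partial>Qp.PP n)"

lemma a_lim: "a1 \<longlonglongrightarrow> 0" "a2 \<longlonglongrightarrow> 0" "a3 \<longlonglongrightarrow> 0"
proof -
  show "a1 \<longlonglongrightarrow> 0" unfolding a1_def[abs_def] using Qp.lln_L1[OF wg2int(1)] wg2int(2) by simp
  show "a2 \<longlonglongrightarrow> 0" unfolding a2_def[abs_def] using Qp.lln_L1[OF wgint(1)] wgint(2) by simp
  show "a3 \<longlonglongrightarrow> 0" unfolding a3_def[abs_def] using Qp.lln_L1[OF wint(1)] wint(2) by simp
qed

lemma E_bound:
  assumes n: "n \<ge> 1" and d: "\<delta> > 0"
  shows "E n \<le> 2 * \<delta>^2 + a1 n + (c / \<delta>) * a2 n + (2 * c) * a3 n"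
proof -
  let ?A1 = "\<lambda>z. \<bar>(\<Sum>i<n. w (z i) * (g (z i))^2) / n - c\<bar>"
  let ?A2 = "\<lambda>z. \<bar>(\<Sum>i<n. w (z i) * g (z i)) / n - 0\<bar>"
  let ?A3 = "\<lambda>z. \<bar>(\<Sum>i<n. w (z i)) / n - 1\<bar>"
  have i1: "integrable (Qp.PP n) ?A1" by (rule lln_int[OF wg2int(1)])
  have i2: "integrable (Qp.PP n) ?A2" by (rule lln_int[OF wgint(1)])
  have i3: "integrable (Qp.PP n) ?A3" by (rule lln_int[OF wint(1)])
  have iX: "integrable (Qp.PP n) (\<lambda>z. (Tf n z)^2 / (n * Wf n z))"
  proof -
    have "integrable (Qp.PP n) (\<lambda>z. (Tf n z)^2 / Wf n z / n)" by (rule integrable_divide[OF T2W_int])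
    then show ?thesis by (simp add: divide_divide_eq_left mult.commute)
  qed
  have ic: "integrable (Qp.PP n) (\<lambda>z. 2 * \<delta>^2)"
    by (rule finite_measure.integrable_const[OF prob_space.finite_measure[OF Qp.PP_prob]])
  have iB0: "integrable (Qp.PP n) (\<lambda>z. 2 * \<delta>^2 + ?A1 z)"
    using ic i1 by (rule Bochner_Integration.integrable_add)
  have iB1: "integrable (Qp.PP n) (\<lambda>z. 2 * \<delta>^2 + ?A1 z + (c / \<delta>) * ?A2 z)"
    using iB0 integrable_mult_right[OF i2, of "c / \<delta>"] by (rule Bochner_Integration.integrable_add)
  have iB2: "integrable (Qp.PP n) (\<lambda>z. 2 * \<delta>^2 + ?A1 z + (c / \<delta>) * ?A2 z + (2 * c) * ?A3 z)"
    using iB1 integrable_mult_right[OF i3, of "2 * c"] by (rule Bochner_Integration.integrable_add)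
  have "E n \<le> (\<integral>z. 2 * \<delta>^2 + ?A1 z + (c / \<delta>) * ?A2 z + (2 * c) * ?A3 z \<partial>Qp.PP n)"
    unfolding E_def
  proof (rule integral_mono)
    show "integrable (Qp.PP n) (\<lambda>z. 2 * \<delta>^2 + ?A1 z + (c / \<delta>) * ?A2 z + (2 * c) * ?A3 z)"
      by (rule iB2)
    show "integrable (Qp.PP n) (\<lambda>z. (Tf n z)^2 / (n * Wf n z))" by (rule iX)
    fix z assume z: "z \<in> space (Qp.PP n)"
    have nr: "real n > 0" using n by simp
    have "(Tf n z)^2 / (n * Wf n z) \<le> 2 * \<delta>^2 + \<bar>Vf n z / n - c\<bar> + c * (\<bar>Tf n z / n\<bar> / \<delta> + 2 * \<bar>Wf n z / n - 1\<bar>)"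
      by (rule X_bound[OF nr d c0 W_nn[OF z] TV[OF z]])
    also have "\<dots> = 2 * \<delta>^2 + ?A1 z + (c / \<delta>) * ?A2 z + (2 * c) * ?A3 z"
      unfolding Vf_def Tf_def Wf_def by (simp add: algebra_simps)
    finally show "(Tf n z)^2 / (n * Wf n z) \<le> 2 * \<delta>^2 + ?A1 z + (c / \<delta>) * ?A2 z + (2 * c) * ?A3 z" .
  qed
  also have "\<dots> = (\<integral>z. 2 * \<delta>^2 + ?A1 z + (c / \<delta>) * ?A2 z \<partial>Qp.PP n) + (\<integral>z. (2 * c) * ?A3 z \<partial>Qp.PP n)"
    by (rule Bochner_Integration.integral_add[OF iB1 integrable_mult_right[OF i3]])
  also have "(\<integral>z. 2 * \<delta>^2 + ?A1 z + (c / \<delta>) * ?A2 z \<partial>Qp.PP n) = (\<integral>z. 2 * \<delta>^2 + ?A1 z \<partial>Qp.PP n) + (\<integral>z. (c / \<delta>) * ?A2 z \<partial>Qp.PP n)"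
    by (rule Bochner_Integration.integral_add[OF iB0 integrable_mult_right[OF i2]])
  also have "(\<integral>z. 2 * \<delta>^2 + ?A1 z \<partial>Qp.PP n) = (\<integral>z. 2 * \<delta>^2 \<partial>Qp.PP n) + (\<integral>z. ?A1 z \<partial>Qp.PP n)"
    by (rule Bochner_Integration.integral_add[OF ic i1])
  also have "(\<integral>z. 2 * \<delta>^2 \<partial>Qp.PP n) = 2 * \<delta>^2"
    using prob_space.prob_space[OF Qp.PP_prob[of n]] by simp
  also have "(\<integral>z. (c / \<delta>) * ?A2 z \<partial>Qp.PP n) = (c / \<delta>) * a2 n"
    unfolding a2_def by (rule integral_mult_right_zero)
  also have "(\<integral>z. (2 * c) * ?A3 z \<partial>Qp.PP n) = (2 * c) * a3 n"
    unfolding a3_def by (rule integral_mult_right_zero)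
  also have "(\<integral>z. ?A1 z \<partial>Qp.PP n) = a1 n" unfolding a1_def ..
  finally show ?thesis .
qed

lemma E_nn: "E n \<ge> 0"
  unfolding E_def using W_nn by (intro integral_nonneg_AE AE_I2) auto

lemma E_lim: "E \<longlonglongrightarrow> 0"
proof (rule LIMSEQ_I)
  fix e :: real assume e: "e > 0"
  define \<delta> where "\<delta> = sqrt e / 2"
  have d: "\<delta> > 0" unfolding \<delta>_def using e by simp
  have d2: "2 * \<delta>^2 = e / 2" unfolding \<delta>_def using e by (simp add: power_divide)
  have "(\<lambda>n. a1 n + (c / \<delta>) * a2 n + (2 * c) * a3 n) \<longlonglongrightarrow> 0 + (c / \<delta>) * 0 + (2 * c) * 0"
    using a_lim by (intro tendsto_intros)
  then have "(\<lambda>n. a1 n + (c / \<delta>) * a2 n + (2 * c) * a3 n) \<longlonglongrightarrow> 0" by simp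
  from LIMSEQ_D[OF this, of "e/2"] e obtain N1 where
    N1: "\<And>n. n \<ge> N1 \<Longrightarrow> norm (a1 n + (c / \<delta>) * a2 n + (2 * c) * a3 n - 0) < e / 2" by auto
  show "\<exists>no. \<forall>n\<ge>no. norm (E n - 0) < e"
  proof (intro exI allI impI)
    fix n assume n: "max N1 1 \<le> n"
    have "E n \<le> 2 * \<delta>^2 + a1 n + (c / \<delta>) * a2 n + (2 * c) * a3 n" using E_bound[OF _ d, of n] n by simp
    moreover have "a1 n + (c / \<delta>) * a2 n + (2 * c) * a3 n < e / 2"
    proof -
      have "norm (a1 n + (c / \<delta>) * a2 n + (2 * c) * a3 n - 0) < e / 2" using N1[of n] n by simp
      then have "\<bar>a1 n + (c / \<delta>) * a2 n + (2 * c) * a3 n\<bar> < e / 2" by (simp only: real_norm_def diff_zero)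
      then show ?thesis by linarith
    qed
    ultimately have "E n < e" using d2 by linarith
    then show "norm (E n - 0) < e" using E_nn[of n] by simp
  qed
qed


lemma LHS_eq:
  assumes N: "N \<ge> 2"
  shows "(\<integral>x. f x * isir_op M p q N f x \<partial>Pd) = \<mu>^2 + E N"
proof -
  obtain m where m: "N = Suc m" "m \<ge> 1" using N by (cases N) auto
  have "(\<integral>x. f x * isir_op M p q N f x \<partial>Pd) = (\<integral>z. Gj N 0 f z \<partial>Qp.PP N)"
    unfolding m(1) by (rule main_eq[OF m(2) fm f2])
  also have "\<dots> = (\<integral>z. (Sf N f z)^2 / Wf N z \<partial>Qp.PP N) / N"
  proof -
    have h: "real N * (\<integral>z. Gj N 0 f z \<partial>Qp.PP N) = (\<integral>z. (Sf N f z)^2 / Wf N z \<partial>Qp.PP N)"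
      by (rule F_sym[OF fm f2])
    have "real N \<noteq> 0" using N by simp
    then show ?thesis using h by (simp only: eq_divide_eq not_False_eq_True if_True mult.commute)
  qed
  also have "\<dots> = \<mu>^2 + E N" using F_eq[of N] N by simp
  finally show ?thesis .
qed

lemma final_lim: "(\<lambda>N. \<integral>x. f x * isir_op M p q N f x \<partial>Pd) \<longlonglongrightarrow> \<mu>^2"
proof (rule Lim_transform_eventually)
  show "(\<lambda>N. \<mu>^2 + E N) \<longlonglongrightarrow> \<mu>^2"
    using tendsto_add[OF tendsto_const E_lim, of "\<mu>^2"] by simp
  show "\<forall>\<^sub>F N in sequentially. \<mu>^2 + E N = (\<integral>x. f x * isir_op M p q N f x \<partial>Pd)"
    unfolding eventually_sequentially
    by (rule exI[of _ 2], intro allI impI, rule LHS_eq[symmetric])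
qed

end

theorem proposition6p8:
  fixes M :: "'a measure" and p q f :: "'a \<Rightarrow> real"
  assumes "sigma_finite_measure M"
    and "p \<in> borel_measurable M" and "q \<in> borel_measurable M"
    and "\<And>x. x \<in> space M \<Longrightarrow> p x \<ge> 0"
    and "\<And>x. x \<in> space M \<Longrightarrow> q x \<ge> 0"
    and "(\<integral>\<^sup>+x. ennreal (p x) \<partial>M) = 1"
    and "(\<integral>\<^sup>+x. ennreal (q x) \<partial>M) = 1"
    and "\<And>x. x \<in> space M \<Longrightarrow> p x > 0 \<Longrightarrow> q x > 0"
    and "f \<in> borel_measurable M"
    and "integrable (density M (\<lambda>x. ennreal (p x))) (\<lambda>x. (f x)\<^sup>2)"
  shows "(\<lambda>N. \<integral>x. f x * isir_op M p q N f x \<partial>(density M (\<lambda>x. ennreal (p x))))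
           \<longlonglongrightarrow> (\<integral>x. f x \<partial>(density M (\<lambda>x. ennreal (p x))))\<^sup>2"
proof -
  interpret isir M p q
    by (rule isir.intro) (rule assms; assumption)+
  interpret isir_f M p q f
    by (rule isir_f.intro, unfold_locales) (rule assms)+
  show ?thesis using final_lim unfolding \<mu>_def .
qed

end
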